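(* Let $\mathcal U$ be a finite set with $|\mathcal U|=n$, let $V'\subseteq\mathbb{R}^{\mathcal U}$ be a linear subspace, and let $f_0\in\mathbb{R}^{\mathcal U}$ be nonzero with support $S=\{u:f_0(u)\neq0\}$ satisfying $|S|\le\mu n$ for some $\mu>0$. Let $V=\mathrm{span}(V'\cup\{f_0\})$ and let $f\in\mathbb{R}^{\mathcal U}$ be nonzero. Suppose there are $\alpha>0$, $\epsilon\in[0,1)$ and $\eta\ge0$ such that: (i) $\|f'\|_2\le\alpha\|f'\|_1$ for all $f'\in V'$; (ii) $\langle f_0,f\rangle\ge(1-\epsilon)\|f_0\|_2\|f\|_2$; (iii) $\langle f',f\rangle\le\eta\|f'\|_2\|f\|_2$ for all $f'\in V'$; (iv) $\dfrac{\eta}{1-\epsilon}<\dfrac{1}{\alpha\sqrt{\mu}}-2$. Then $f_0/\langle f_0,f\rangle$ is the unique optimal solution of the linear program $\min\{\|y\|_1: y\in V,\ \langle y,f\rangle=1\}$.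
   Context: All norms and inner products use the uniform (expectation) measure on $\mathcal U$: $\langle g,h\rangle=\mathbb{E}_{u\in\mathcal U}g(u)h(u)$, $\|g\|_p=(\mathbb{E}_{u\in\mathcal U}|g(u)|^p)^{1/p}$. *)

theory Defs
  imports "HOL-Analysis.Analysis"
begin

text \<open>Elements of R^U, U a finite type 'u (vectors real^'u), with the uniform (expectation) measure.\<close>

definition ip :: "real ^ 'u::finite \<Rightarrow> real ^ 'u \<Rightarrow> real" where
  "ip g h = (\<Sum>u\<in>UNIV. g $ u * h $ u) / real CARD('u)"

definition norm1 :: "real ^ 'u::finite \<Rightarrow> real" where
  "norm1 g = (\<Sum>u\<in>UNIV. \<bar>g $ u\<bar>) / real CARD('u)"

definition norm2 :: "real ^ 'u::finite \<Rightarrow> real" where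
  "norm2 g = sqrt ((\<Sum>u\<in>UNIV. (g $ u)^2) / real CARD('u))"

definition unique_LP_opt :: "(real ^ 'u::finite) set \<Rightarrow> real ^ 'u \<Rightarrow> real ^ 'u \<Rightarrow> bool" where
  "unique_LP_opt V f y0 \<longleftrightarrow>
     y0 \<in> V \<and> ip y0 f = 1 \<and>
     (\<forall>y. y \<in> V \<and> ip y f = 1 \<and> y \<noteq> y0 \<longrightarrow> norm1 y0 < norm1 y)"

end

theory Submission
  imports Defs
begin

lemma ip_add: "ip (a + b) f = ip a f + ip b f"
  by (simp add: ip_def sum.distrib distrib_right add_divide_distrib)

lemma ip_scale: "ip (c *\<^sub>R a) f = c * ip a f"
  by (simp add: ip_def sum_distrib_left mult.assoc)

lemma ip_neg: "ip (- a) f = - ip a f"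
  by (simp add: ip_def sum_negf)

lemma norm2_neg: "norm2 (- a) = norm2 a"
  by (simp add: norm2_def)

lemma norm2_pos:
  fixes g :: "real ^ 'u::finite"
  assumes "g \<noteq> 0" shows "norm2 g > 0"
proof -
  obtain u where u: "g $ u \<noteq> 0" using assms by (metis vec_eq_iff zero_index)
  have "(g $ u)^2 \<le> (\<Sum>v\<in>UNIV. (g $ v)^2)"
    by (rule member_le_sum) auto
  moreover have "(g $ u)^2 > 0" using u by simp
  ultimately have "(\<Sum>v\<in>UNIV. (g $ v)^2) > 0" by linarith
  then show ?thesis unfolding norm2_def by simp
qed

lemma cs_part:
  fixes g :: "real ^ 'u::finite"
  assumes "real (card S) \<le> \<mu> * real CARD('u)"
  shows "(\<Sum>u\<in>S. \<bar>g $ u\<bar>) / real CARD('u) \<le> sqrt \<mu> * norm2 g"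
proof -
  define n where "n = real CARD('u)"
  have n: "n > 0" unfolding n_def by simp
  have "(\<Sum>u\<in>S. \<bar>g $ u\<bar>) = (\<Sum>u\<in>S. \<bar>1::real\<bar> * \<bar>g $ u\<bar>)" by simp
  also have "\<dots> \<le> L2_set (\<lambda>_. 1::real) S * L2_set (\<lambda>u. g $ u) S"
    by (rule L2_set_mult_ineq)
  also have "L2_set (\<lambda>_. 1::real) S = sqrt (real (card S))"
    by (simp add: L2_set_def)
  also have "L2_set (\<lambda>u. g $ u) S \<le> sqrt (\<Sum>u\<in>UNIV. (g $ u)^2)"
    unfolding L2_set_def by (rule real_sqrt_le_mono, rule sum_mono2) auto
  finally have A: "(\<Sum>u\<in>S. \<bar>g $ u\<bar>) \<le> sqrt (real (card S)) * sqrt (\<Sum>u\<in>UNIV. (g $ u)^2)"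
    by (simp add: mult_left_mono)
  have B: "sqrt (real (card S)) \<le> sqrt (\<mu> * n)"
    using assms n_def by simp
  have "sqrt \<mu> * norm2 g = sqrt (\<mu> * n) * sqrt (\<Sum>u\<in>UNIV. (g $ u)^2) / n"
  proof -
    define Q where "Q = (\<Sum>u\<in>UNIV. (g $ u)^2)"
    have sn: "sqrt n > 0" using n by simp
    have nn: "sqrt n * sqrt n = n" using n by simp
    have "sqrt \<mu> * norm2 g = sqrt \<mu> * (sqrt Q / sqrt n)"
      unfolding norm2_def n_def[symmetric] Q_def[symmetric] by (simp add: real_sqrt_divide)
    also have "\<dots> = sqrt \<mu> * sqrt n * sqrt Q / (sqrt n * sqrt n)"
      using sn by (simp add: field_simps)
    also have "\<dots> = sqrt (\<mu> * n) * sqrt Q / n"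
      unfolding nn by (simp add: real_sqrt_mult)
    finally show ?thesis unfolding Q_def .
  qed
  moreover have "(\<Sum>u\<in>S. \<bar>g $ u\<bar>) \<le> sqrt (\<mu> * n) * sqrt (\<Sum>u\<in>UNIV. (g $ u)^2)"
  proof -
    have z: "0 \<le> sqrt (\<Sum>u\<in>UNIV. (g $ u)^2)" by (simp add: sum_nonneg)
    show ?thesis using A mult_right_mono[OF B z] by (rule order_trans)
  qed
  ultimately show ?thesis using n unfolding n_def[symmetric]
    by (simp add: divide_right_mono)
qed

theorem theorem5p3:
  fixes V' :: "(real ^ 'u::finite) set"
    and f0 f :: "real ^ 'u"
    and \<mu> \<alpha> \<epsilon> \<eta> :: real
  assumes "subspace V'"
    and "f0 \<noteq> 0"
    and "\<mu> > 0"
    and "real (card {u. f0 $ u \<noteq> 0}) \<le> \<mu> * real CARD('u)"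
    and "f \<noteq> 0"
    and "\<alpha> > 0" and "0 \<le> \<epsilon>" and "\<epsilon> < 1" and "\<eta> \<ge> 0"
    and "\<forall>f'\<in>V'. norm2 f' \<le> \<alpha> * norm1 f'"
    and "ip f0 f \<ge> (1 - \<epsilon>) * norm2 f0 * norm2 f"
    and "\<forall>f'\<in>V'. ip f' f \<le> \<eta> * norm2 f' * norm2 f"
    and "\<eta> / (1 - \<epsilon>) < 1 / (\<alpha> * sqrt \<mu>) - 2"
  shows "unique_LP_opt (span (V' \<union> {f0})) f ((1 / ip f0 f) *\<^sub>R f0)"
proof -
  define S where "S = {u. f0 $ u \<noteq> 0}"
  define n where "n = real CARD('u)"
  have n: "n > 0" unfolding n_def by simp
  define y0 where "y0 = (1 / ip f0 f) *\<^sub>R f0"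
  have n2f0: "norm2 f0 > 0" using norm2_pos assms(2) .
  have n2f: "norm2 f > 0" using norm2_pos assms(5) .
  have ipf0: "ip f0 f > 0"
    using assms(8,11) n2f0 n2f by (smt (verit) mult_pos_pos)
  have spaneq: "span (V' \<union> {f0}) = {x. \<exists>k. x - k *\<^sub>R f0 \<in> V'}"
  proof -
    have sp: "span V' = V'" using assms(1) by (rule span_eq_iff[THEN iffD2])
    have "span (V' \<union> {f0}) = span (insert f0 V')" by simp
    also have "\<dots> = {x. \<exists>k. x - k *\<^sub>R f0 \<in> span V'}" by (rule span_insert)
    also have "\<dots> = {x. \<exists>k. x - k *\<^sub>R f0 \<in> V'}" by (simp only: sp)
    finally show ?thesis .
  qed
  have y0V: "y0 \<in> span (V' \<union> {f0})"
    unfolding spaneq y0_def by (rule CollectI, rule exI[of _ "1 / ip f0 f"]) (simp add: assms(1) subspace_0)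
  have y0ip: "ip y0 f = 1" unfolding y0_def ip_scale using ipf0 by simp
  have sm: "sqrt \<mu> > 0" using assms(3) by simp
  define k where "k = \<eta> / (1 - \<epsilon>)"
  have k: "sqrt \<mu> * k < 1 / \<alpha> - 2 * sqrt \<mu>"
  proof -
    have "sqrt \<mu> * k < sqrt \<mu> * (1 / (\<alpha> * sqrt \<mu>) - 2)"
      unfolding k_def by (rule mult_strict_left_mono[OF assms(13) sm])
    also have "\<dots> = 1 / \<alpha> - 2 * sqrt \<mu>" using sm by (simp add: field_simps)
    finally show ?thesis .
  qed
  have main: "norm1 y0 < norm1 y" if yV: "y \<in> span (V' \<union> {f0})" and yip: "ip y f = 1"
    and yne: "y \<noteq> y0" for y
  proof -
    obtain c where gV: "y - c *\<^sub>R f0 \<in> V'" using yV unfolding spaneq by auto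
    define g where "g = y - c *\<^sub>R f0"
    define t where "t = c - 1 / ip f0 f"
    have yeq: "y = y0 + g + t *\<^sub>R f0"
      unfolding g_def t_def y0_def by (simp add: algebra_simps)
    have "ip y f = ip y0 f + ip g f + t * ip f0 f"
      unfolding yeq ip_add ip_scale ..
    hence tg: "ip g f + t * ip f0 f = 0" using yip y0ip by simp
    have gne: "g \<noteq> 0"
    proof
      assume "g = 0"
      have "ip g f = 0" unfolding \<open>g = 0\<close> by (simp add: ip_def)
      hence "t = 0" using tg ipf0 by simp
      thus False using yne yeq \<open>g = 0\<close> by simp
    qed
    have gV': "g \<in> V'" using gV g_def by simp
    have a: "norm2 g > 0" using norm2_pos gne .
    have b1: "ip g f \<le> \<eta> * norm2 g * norm2 f" using assms(12) gV' by blast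
    have "ip (- g) f \<le> \<eta> * norm2 (- g) * norm2 f"
      using assms(12) gV' assms(1) by (simp add: subspace_neg)
    hence b2: "- ip g f \<le> \<eta> * norm2 g * norm2 f" by (simp add: ip_neg norm2_neg)
    have absig: "\<bar>ip g f\<bar> \<le> \<eta> * norm2 g * norm2 f" using b1 b2 by linarith
    have tabs: "\<bar>t\<bar> * ip f0 f = \<bar>ip g f\<bar>"
    proof -
      have e: "t * ip f0 f = - ip g f" using tg by linarith
      have "\<bar>t\<bar> * ip f0 f = \<bar>t * ip f0 f\<bar>" using ipf0 by (simp add: abs_mult)
      also have "\<dots> = \<bar>ip g f\<bar>" using e by simp
      finally show ?thesis .
    qed
    have tbound: "\<bar>t\<bar> * norm2 f0 \<le> k * norm2 g"
    proof -
      have "\<bar>t\<bar> * ((1 - \<epsilon>) * norm2 f0 * norm2 f) \<le> \<bar>t\<bar> * ip f0 f"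
        using assms(11) by (simp add: mult_left_mono)
      also have "\<dots> \<le> \<eta> * norm2 g * norm2 f" using tabs absig by simp
      finally have X: "\<bar>t\<bar> * ((1 - \<epsilon>) * norm2 f0 * norm2 f) \<le> \<eta> * norm2 g * norm2 f" .
      have "(k * norm2 g) * ((1 - \<epsilon>) * norm2 f) = \<eta> * norm2 g * norm2 f"
        unfolding k_def using assms(8) by (simp add: field_simps)
      moreover have "(\<bar>t\<bar> * norm2 f0) * ((1 - \<epsilon>) * norm2 f) = \<bar>t\<bar> * ((1 - \<epsilon>) * norm2 f0 * norm2 f)"
        by (simp add: algebra_simps)
      ultimately have "(\<bar>t\<bar> * norm2 f0) * ((1 - \<epsilon>) * norm2 f) \<le> (k * norm2 g) * ((1 - \<epsilon>) * norm2 f)"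
        using X by (simp only:)
      moreover have "(1 - \<epsilon>) * norm2 f > 0" using assms(8) n2f by simp
      ultimately show ?thesis by (meson mult_le_cancel_right_pos)
    qed
    have pw: "\<bar>y $ u\<bar> \<ge> \<bar>y0 $ u\<bar> + \<bar>g $ u\<bar> - 2 * (if u \<in> S then \<bar>g $ u\<bar> else 0) - \<bar>t\<bar> * \<bar>f0 $ u\<bar>" for u
    proof (cases "u \<in> S")
      case True
      have "y $ u = y0 $ u + g $ u + t * f0 $ u" using yeq by simp
      moreover have "\<bar>y0 $ u\<bar> - \<bar>g $ u\<bar> - \<bar>t * f0 $ u\<bar> \<le> \<bar>y0 $ u + g $ u + t * f0 $ u\<bar>"
        by arith
      ultimately show ?thesis using True by (simp add: abs_mult)
    next
      case False
      then have "f0 $ u = 0" unfolding S_def by simp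
      then show ?thesis using yeq unfolding y0_def by simp
    qed
    have "(\<Sum>u\<in>UNIV. \<bar>y0 $ u\<bar> + \<bar>g $ u\<bar> - 2 * (if u \<in> S then \<bar>g $ u\<bar> else 0) - \<bar>t\<bar> * \<bar>f0 $ u\<bar>)
        \<le> (\<Sum>u\<in>UNIV. \<bar>y $ u\<bar>)"
      by (rule sum_mono) (use pw in auto)
    moreover have "(\<Sum>u\<in>UNIV. \<bar>y0 $ u\<bar> + \<bar>g $ u\<bar> - 2 * (if u \<in> S then \<bar>g $ u\<bar> else 0) - \<bar>t\<bar> * \<bar>f0 $ u\<bar>)
       = (\<Sum>u\<in>UNIV. \<bar>y0 $ u\<bar>) + (\<Sum>u\<in>UNIV. \<bar>g $ u\<bar>) - 2 * (\<Sum>u\<in>S. \<bar>g $ u\<bar>) - \<bar>t\<bar> * (\<Sum>u\<in>UNIV. \<bar>f0 $ u\<bar>)"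
    proof -
      have H: "(\<Sum>u\<in>UNIV. (if u \<in> S then \<bar>g $ u\<bar> else 0)) = (\<Sum>u\<in>S. \<bar>g $ u\<bar>)"
        using sum.inter_restrict[of UNIV "\<lambda>u. \<bar>g $ u\<bar>" S] by simp
      show ?thesis by (simp add: sum.distrib sum_subtractf sum_distrib_left[symmetric] H)
    qed
    moreover have "(\<Sum>u\<in>UNIV. \<bar>f0 $ u\<bar>) = (\<Sum>u\<in>S. \<bar>f0 $ u\<bar>)"
      unfolding S_def by (rule sum.mono_neutral_right) auto
    ultimately have sumineq: "(\<Sum>u\<in>UNIV. \<bar>y0 $ u\<bar>) + (\<Sum>u\<in>UNIV. \<bar>g $ u\<bar>) - 2 * (\<Sum>u\<in>S. \<bar>g $ u\<bar>) - \<bar>t\<bar> * (\<Sum>u\<in>S. \<bar>f0 $ u\<bar>)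
        \<le> (\<Sum>u\<in>UNIV. \<bar>y $ u\<bar>)" by simp
    have ineq: "norm1 y0 + norm1 g - 2 * ((\<Sum>u\<in>S. \<bar>g $ u\<bar>) / n) - \<bar>t\<bar> * ((\<Sum>u\<in>S. \<bar>f0 $ u\<bar>) / n) \<le> norm1 y"
    proof -
      have "((\<Sum>u\<in>UNIV. \<bar>y0 $ u\<bar>) + (\<Sum>u\<in>UNIV. \<bar>g $ u\<bar>) - 2 * (\<Sum>u\<in>S. \<bar>g $ u\<bar>) - \<bar>t\<bar> * (\<Sum>u\<in>S. \<bar>f0 $ u\<bar>)) / n
        \<le> (\<Sum>u\<in>UNIV. \<bar>y $ u\<bar>) / n"
        using sumineq n by (simp add: divide_right_mono)
      moreover have "((\<Sum>u\<in>UNIV. \<bar>y0 $ u\<bar>) + (\<Sum>u\<in>UNIV. \<bar>g $ u\<bar>) - 2 * (\<Sum>u\<in>S. \<bar>g $ u\<bar>) - \<bar>t\<bar> * (\<Sum>u\<in>S. \<bar>f0 $ u\<bar>)) / n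
        = (\<Sum>u\<in>UNIV. \<bar>y0 $ u\<bar>) / n + (\<Sum>u\<in>UNIV. \<bar>g $ u\<bar>) / n - 2 * ((\<Sum>u\<in>S. \<bar>g $ u\<bar>) / n) - \<bar>t\<bar> * ((\<Sum>u\<in>S. \<bar>f0 $ u\<bar>) / n)"
        by (simp add: add_divide_distrib diff_divide_distrib)
      ultimately show ?thesis unfolding norm1_def n_def[symmetric] by simp
    qed
    have c1: "(\<Sum>u\<in>S. \<bar>g $ u\<bar>) / n \<le> sqrt \<mu> * norm2 g"
      using cs_part[of S \<mu> g] assms(4) unfolding S_def n_def by simp
    have c2: "(\<Sum>u\<in>S. \<bar>f0 $ u\<bar>) / n \<le> sqrt \<mu> * norm2 f0"
      using cs_part[of S \<mu> f0] assms(4) unfolding S_def n_def by simp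
    have c3: "\<bar>t\<bar> * ((\<Sum>u\<in>S. \<bar>f0 $ u\<bar>) / n) \<le> sqrt \<mu> * (k * norm2 g)"
    proof -
      have "\<bar>t\<bar> * ((\<Sum>u\<in>S. \<bar>f0 $ u\<bar>) / n) \<le> \<bar>t\<bar> * (sqrt \<mu> * norm2 f0)"
        using c2 by (rule mult_left_mono) simp
      also have "\<dots> = sqrt \<mu> * (\<bar>t\<bar> * norm2 f0)" by simp
      also have "\<dots> \<le> sqrt \<mu> * (k * norm2 g)" using tbound sm by (simp add: mult_left_mono)
      finally show ?thesis .
    qed
    have c4: "norm2 g / \<alpha> \<le> norm1 g"
      using assms(10) gV' assms(6) by (simp add: divide_le_eq mult.commute)
    have "(sqrt \<mu> * k) * norm2 g < (1 / \<alpha> - 2 * sqrt \<mu>) * norm2 g"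
      using k a by (simp add: mult_strict_right_mono)
    hence "sqrt \<mu> * (k * norm2 g) < norm2 g / \<alpha> - 2 * (sqrt \<mu> * norm2 g)"
      by (simp add: algebra_simps)
    then show ?thesis using ineq c1 c3 c4 by linarith
  qed
  show ?thesis unfolding unique_LP_opt_def y0_def[symmetric]
    using y0V y0ip main by blast
qed

end
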